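(* The number $K_T$ of episodes of \texttt{UCMNLK} over $T$ steps satisfies $K_T\le1+d\log_2(1+2TL_\varphi^2/\lambda)$.
   Context: \texttt{UCMNLK} maintains $\Sigma_1=\lambda I_d$ ($\lambda>0$) and $\Sigma_{t+1}=\Sigma_t+\nabla^2\ell_t(\widehat\theta_{t+1})$, where $\ell_t(\theta)=-\sum_{s'\in\mathcal S_t}y_{t,s'}\log p_{t,s'}(\theta)$ is the multinomial log-loss at step $t$ with Hessian $\nabla^2\ell_t(\theta)=\sum_{s'}p_{t,s'}(\theta)\varphi_{t,s'}\varphi_{t,s'}^\top-\sum_{s',s''}p_{t,s'}(\theta)p_{t,s''}(\theta)\varphi_{t,s'}\varphi_{t,s''}^\top$, $p_{t,\cdot}(\theta)$ a probability vector on the finite set $\mathcal S_t$, and $\|\varphi_{t,s'}\|_2\le L_\varphi$. A new episode starts at time $t$ (and $t_{k+1}=t$) as soon as $\det\Sigma_t>2\det\Sigma_{t_k}$, where $t_k$ is the start of the current episode. *)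

theory Defs
  imports "HOL-Analysis.Analysis"
begin

definition mnl_hess :: "'s set \<Rightarrow> ('s \<Rightarrow> real) \<Rightarrow> ('s \<Rightarrow> real^'n) \<Rightarrow> real^'n^'n" where
  "mnl_hess A p phi =
     (\<chi> i j. (\<Sum>s\<in>A. p s * (phi s $ i) * (phi s $ j))
            - (\<Sum>s\<in>A. \<Sum>s'\<in>A. p s * p s' * (phi s $ i) * (phi s' $ j)))"

text \<open>Gram matrices of UCMNLK: Sigma 1 = lambda I, Sigma (t+1) = Sigma t + H t,
  where H t is the Hessian at step t (evaluated at the estimate theta_(t+1)).
  Index 0 is a dummy (set equal to Sigma 1).\<close>
fun ucm_sigma :: "real \<Rightarrow> (nat \<Rightarrow> real^'n^'n) \<Rightarrow> nat \<Rightarrow> real^'n^'n" where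
  "ucm_sigma lam H 0 = lam *\<^sub>R mat 1"
| "ucm_sigma lam H (Suc 0) = lam *\<^sub>R mat 1"
| "ucm_sigma lam H (Suc (Suc t)) = ucm_sigma lam H (Suc t) + H (Suc t)"

text \<open>Start time of the episode that is current at time t (t >= 1): episode 1 starts at
  time 1; a new episode starts at time t as soon as det Sigma_t > 2 det Sigma_(t_k).\<close>
fun ep_start :: "(nat \<Rightarrow> real^'n^'n) \<Rightarrow> nat \<Rightarrow> nat" where
  "ep_start S 0 = 1"
| "ep_start S (Suc 0) = 1"
| "ep_start S (Suc (Suc t)) =
     (if det (S (Suc (Suc t))) > 2 * det (S (ep_start S (Suc t))) then Suc (Suc t)
      else ep_start S (Suc t))"

definition num_episodes :: "(nat \<Rightarrow> real^'n^'n) \<Rightarrow> nat \<Rightarrow> nat" where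
  "num_episodes S T = card {t \<in> {1..T}. ep_start S t = t}"

end

theory Submission imports Defs "Jordan_Normal_Form.Schur_Decomposition" begin
no_notation Matrix.vec_index (infixl "$" 100)

lemma amgm:
  fixes x :: "nat \<Rightarrow> real"
  assumes "n > 0" "\<And>i. i < n \<Longrightarrow> x i \<ge> 0"
  shows "(\<Prod>i<n. x i) \<le> ((\<Sum>i<n. x i) / n) ^ n"
proof -
  define m where "m = (\<Sum>i<n. x i) / n"
  have m0: "m \<ge> 0" using assms by (auto simp: m_def intro!: sum_nonneg divide_nonneg_nonneg)
  show ?thesis
  proof (cases "m = 0")
    case True
    then have "(\<Sum>i<n. x i) = 0" using assms(1) by (simp add: m_def)
    then have "\<forall>i\<in>{..<n}. x i = 0" using assms(2) by (subst sum_nonneg_eq_0_iff[symmetric]) auto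
    then have "x 0 = 0" using assms(1) by auto
    then have pz: "(\<Prod>i<n. x i) = 0" using assms(1) by (intro prod_zero) auto
    have z: "((\<Sum>i<n. x i) / n) ^ n = 0" using True assms(1) by (simp add: m_def[symmetric])
    show ?thesis using pz z by linarith
  next
    case False
    then have mp: "m > 0" using m0 by simp
    have "(\<Prod>i<n. x i / m) \<le> (\<Prod>i<n. exp (x i / m - 1))"
    proof (intro prod_mono conjI)
      fix i assume "i \<in> {..<n}"
      then show "0 \<le> x i / m" using assms mp by auto
      show "x i / m \<le> exp (x i / m - 1)" using exp_ge_add_one_self[of "x i / m - 1"] by simp
    qed
    also have "\<dots> = exp (\<Sum>i<n. x i / m - 1)" by (simp add: exp_sum)
    also have "(\<Sum>i<n. x i / m - 1) = 0"
    proof -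
      have sx: "(\<Sum>i<n. x i) = n * m" using assms(1) by (simp add: m_def)
      have "(\<Sum>i<n. x i / m - 1) = (\<Sum>i<n. x i) / m - n"
        by (simp add: sum_subtractf sum_divide_distrib)
      then show ?thesis using sx mp by simp
    qed
    finally have "(\<Prod>i<n. x i) / m ^ n \<le> 1" by (simp add: prod_dividef)
    then show ?thesis using mp by (simp add: m_def[symmetric] divide_le_eq)
  qed
qed

lemma det_transport:
  fixes A :: "'a::comm_ring_1^'n^'n" and h :: "nat \<Rightarrow> 'n"
  assumes h: "bij_betw h {0..<CARD('n)} UNIV"
  shows "Determinants.det A = Determinant.det (Matrix.mat CARD('n) CARD('n) (\<lambda>(i,j). A $ h i $ h j))"
proof -
  let ?n = "CARD('n)"
  let ?F = "\<lambda>p x. if x \<in> (UNIV::'n set) then h (p (inv_into {0..<?n} h x)) else x"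
  have bF: "bij_betw ?F {p. p permutes {0..<?n}} {p. p permutes UNIV}"
    by (rule bij_betw_permutations[OF h])
  have inj: "inj_on h {0..<?n}" using h by (auto simp: bij_betw_def)
  have sg: "sign (?F p) = sign p" if "p permutes {0..<?n}" for p
    by (rule permutes_bij_finite.sign_p') (unfold_locales, use that h inj in auto)
  have pr: "(\<Prod>i\<in>UNIV. A $ i $ (?F p i)) = (\<Prod>i=0..<?n. A $ h i $ h (p i))"
    if "p permutes {0..<?n}" for p
  proof -
    have "(\<Prod>i\<in>UNIV. A $ i $ (?F p i)) = (\<Prod>i\<in>{0..<?n}. A $ h i $ (?F p (h i)))"
      by (rule prod.reindex_bij_betw[OF h, symmetric])
    also have "\<dots> = (\<Prod>i=0..<?n. A $ h i $ h (p i))"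
      using inj by (intro prod.cong) auto
    finally show ?thesis .
  qed
  have "Determinants.det A = (\<Sum>q\<in>{p. p permutes UNIV}. of_int (sign q) * (\<Prod>i\<in>UNIV. A $ i $ q i))"
    by (simp add: Determinants.det_def)
  also have "\<dots> = (\<Sum>p\<in>{p. p permutes {0..<?n}}. of_int (sign (?F p)) * (\<Prod>i\<in>UNIV. A $ i $ (?F p i)))"
    by (rule sum.reindex_bij_betw[OF bF, symmetric])
  also have "\<dots> = (\<Sum>p\<in>{p. p permutes {0..<?n}}. of_int (sign p) * (\<Prod>i=0..<?n. A $ h i $ h (p i)))"
    using sg pr by (intro sum.cong) auto
  also have "\<dots> = Determinant.det (Matrix.mat ?n ?n (\<lambda>(i,j). A $ h i $ h j))"
    by (subst Determinant.det_def') (auto intro!: sum.cong prod.cong dest: permutes_in_image)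
  finally show ?thesis .
qed

lemma mult_entry:
  fixes X Y :: "'a::comm_semiring_1 mat"
  assumes "X \<in> carrier_mat n m" "Y \<in> carrier_mat m p" "i < n" "j < p"
  shows "(X * Y) $$ (i,j) = (\<Sum>k<m. X $$ (i,k) * Y $$ (k,j))"
proof -
  have "(X * Y) $$ (i,j) = scalar_prod (Matrix.row X i) (Matrix.col Y j)"
    using assms by (intro index_mult_mat) auto
  also have "\<dots> = (\<Sum>k<m. X $$ (i,k) * Y $$ (k,j))"
    unfolding scalar_prod_def using assms by (intro sum.cong) (auto simp: lessThan_atLeast0)
  finally show ?thesis .
qed

lemma tr_comm:
  fixes X Y :: "'a::comm_semiring_1 mat"
  assumes "X \<in> carrier_mat n m" "Y \<in> carrier_mat m n"
  shows "(\<Sum>i<n. (X * Y) $$ (i,i)) = (\<Sum>j<m. (Y * X) $$ (j,j))"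
proof -
  have "(\<Sum>i<n. (X * Y) $$ (i,i)) = (\<Sum>i<n. \<Sum>k<m. X $$ (i,k) * Y $$ (k,i))"
    using assms by (intro sum.cong refl mult_entry) auto
  also have "\<dots> = (\<Sum>k<m. \<Sum>i<n. Y $$ (k,i) * X $$ (i,k))"
    by (subst sum.swap) (simp add: mult.commute)
  also have "\<dots> = (\<Sum>j<m. (Y * X) $$ (j,j))"
    using assms by (intro sum.cong refl mult_entry[symmetric]) auto
  finally show ?thesis .
qed
lemma mult_vec_entry:
  fixes X :: "'a::comm_semiring_1 mat"
  assumes "X \<in> carrier_mat n m" "v \<in> carrier_vec m" "i < n"
  shows "vec_index (X *\<^sub>v v) i = (\<Sum>k<m. X $$ (i,k) * vec_index v k)"
proof -
  have "vec_index (X *\<^sub>v v) i = scalar_prod (Matrix.row X i) v"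
    using assms by (intro index_mult_mat_vec) auto
  also have "\<dots> = (\<Sum>k<m. X $$ (i,k) * vec_index v k)"
    unfolding scalar_prod_def using assms by (intro sum.cong) (auto simp: lessThan_atLeast0)
  finally show ?thesis .
qed

lemma eig_nonneg:
  fixes M :: "real mat"
  assumes M: "M \<in> carrier_mat n n"
    and sym: "\<And>i j. i < n \<Longrightarrow> j < n \<Longrightarrow> M $$ (i,j) = M $$ (j,i)"
    and psd: "\<And>x. 0 \<le> (\<Sum>i<n. \<Sum>j<n. x i * M $$ (i,j) * x j)"
    and ev: "eigenvalue (map_mat complex_of_real M) e"
  shows "Im e = 0 \<and> Re e \<ge> 0"
proof -
  let ?C = "map_mat complex_of_real M"
  obtain v where v: "v \<in> carrier_vec n" "v \<noteq> 0\<^sub>v n" "?C *\<^sub>v v = e \<cdot>\<^sub>v v"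
    using ev M unfolding eigenvalue_def eigenvector_def by auto
  define x where "x i = Re (vec_index v i)" for i
  define y where "y i = Im (vec_index v i)" for i
  have row: "(\<Sum>j<n. complex_of_real (M $$ (i,j)) * vec_index v j) = e * vec_index v i" if "i < n" for i
  proof -
    have "vec_index (?C *\<^sub>v v) i = e * vec_index v i" using v that by simp
    moreover have "vec_index (?C *\<^sub>v v) i = (\<Sum>j<n. complex_of_real (M $$ (i,j)) * vec_index v j)"
    proof -
      have "vec_index (?C *\<^sub>v v) i = (\<Sum>k<n. ?C $$ (i,k) * vec_index v k)"
        using M v(1) that by (intro mult_vec_entry) auto
      also have "\<dots> = (\<Sum>j<n. complex_of_real (M $$ (i,j)) * vec_index v j)"
        using M that by (intro sum.cong) auto
      finally show ?thesis .
    qed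
    ultimately show ?thesis by simp
  qed
  define Q where "Q = (\<Sum>i<n. cnj (vec_index v i) * (\<Sum>j<n. complex_of_real (M $$ (i,j)) * vec_index v j))"
  define S where "S = (\<Sum>i<n. cnj (vec_index v i) * vec_index v i)"
  have QS: "Q = e * S"
  proof -
    have "Q = (\<Sum>i<n. cnj (vec_index v i) * (e * vec_index v i))"
      unfolding Q_def by (intro sum.cong refl) (simp only: row lessThan_iff)
    also have "\<dots> = (\<Sum>i<n. e * (cnj (vec_index v i) * vec_index v i))"
      by (intro sum.cong refl) (simp only: mult.left_commute)
    also have "\<dots> = e * S" unfolding S_def by (simp only: sum_distrib_left)
    finally show ?thesis .
  qed
  have ReS: "Re S = (\<Sum>i<n. x i ^ 2 + y i ^ 2)" unfolding S_def x_def y_def by (simp add: power2_eq_square)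
  have ImS: "Im S = 0" unfolding S_def by simp
  define t where "t i j = cnj (vec_index v i) * (complex_of_real (M $$ (i,j)) * vec_index v j)" for i j
  have Qt: "Q = (\<Sum>i<n. \<Sum>j<n. t i j)" unfolding Q_def t_def by (simp only: sum_distrib_left)
  have Ret: "Re (t i j) = x i * M $$ (i,j) * x j + y i * M $$ (i,j) * y j" for i j
    unfolding t_def x_def y_def by (simp add: algebra_simps)
  have Imt: "Im (t i j) = x i * M $$ (i,j) * y j - y i * M $$ (i,j) * x j" for i j
    unfolding t_def x_def y_def by (simp add: algebra_simps)
  have ReQ: "Re Q = (\<Sum>i<n. \<Sum>j<n. x i * M $$ (i,j) * x j) + (\<Sum>i<n. \<Sum>j<n. y i * M $$ (i,j) * y j)"
    unfolding Qt Re_sum Ret by (simp only: sum.distrib)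
  have ImQ: "Im Q = (\<Sum>i<n. \<Sum>j<n. x i * M $$ (i,j) * y j) - (\<Sum>i<n. \<Sum>j<n. y i * M $$ (i,j) * x j)"
    unfolding Qt Im_sum Imt by (simp only: sum_subtractf)
  have "(\<Sum>i<n. \<Sum>j<n. y i * M $$ (i,j) * x j) = (\<Sum>j<n. \<Sum>i<n. y i * M $$ (i,j) * x j)"
    by (rule sum.swap)
  also have "\<dots> = (\<Sum>i<n. \<Sum>j<n. x i * M $$ (i,j) * y j)"
    using sym by (intro sum.cong) (auto simp: algebra_simps)
  finally have ImQ0: "Im Q = 0" using ImQ by simp
  have ReQ0: "Re Q \<ge> 0" using ReQ psd[of x] psd[of y] by simp
  obtain k where k: "k < n" "vec_index v k \<noteq> 0"
    using v(1,2) by (auto simp: vec_eq_iff)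
  have "x k ^ 2 + y k ^ 2 > 0" using k(2) unfolding x_def y_def
    using complex_eq_iff[of "vec_index v k" 0] by (simp add: sum_power2_gt_zero_iff)
  then have Spos: "Re S > 0" unfolding ReS
    by (intro sum_pos2[of _ k]) (use k in auto)
  have "Im Q = Im e * Re S" using QS ImS by simp
  then have "Im e = 0" using ImQ0 Spos by simp
  moreover have "Re Q = Re e * Re S" using QS ImS by simp
  then have "Re e \<ge> 0" using ReQ0 Spos by (simp add: zero_le_mult_iff)
  ultimately show ?thesis by simp
qed



lemma det_le_trace:
  fixes A :: "real^'n^'n"
  assumes sym: "\<And>i j. A $ i $ j = A $ j $ i"
    and psd: "\<And>x::real^'n. 0 \<le> (\<Sum>i\<in>UNIV. \<Sum>j\<in>UNIV. x $ i * A $ i $ j * x $ j)"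
  shows "Determinants.det A \<le> (Determinants.trace A / CARD('n)) ^ CARD('n)"
proof -
  let ?n = "CARD('n)"
  obtain h where h: "bij_betw h {0..<?n} (UNIV::'n set)"
    using ex_bij_betw_nat_finite[of "UNIV::'n set"] by auto
  have inj: "inj_on h {0..<?n}" using h by (auto simp: bij_betw_def)
  define M where "M = Matrix.mat ?n ?n (\<lambda>(i,j). A $ h i $ h j)"
  have Mc: "M \<in> carrier_mat ?n ?n" by (simp add: M_def)
  have Mij: "M $$ (i,j) = A $ h i $ h j" if "i < ?n" "j < ?n" for i j
    using that by (simp add: M_def)
  have detA: "Determinants.det A = Determinant.det M"
    unfolding M_def by (rule det_transport[OF h])
  have trA: "Determinants.trace A = (\<Sum>i<?n. M $$ (i,i))"
  proof -
    have "Determinants.trace A = (\<Sum>i\<in>UNIV. A $ i $ i)" by (simp add: Determinants.trace_def)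
    also have "\<dots> = (\<Sum>i\<in>{0..<?n}. A $ h i $ h i)"
      by (rule sum.reindex_bij_betw[OF h, symmetric])
    also have "\<dots> = (\<Sum>i<?n. M $$ (i,i))" by (simp add: Mij lessThan_atLeast0)
    finally show ?thesis .
  qed
  have symM: "M $$ (i,j) = M $$ (j,i)" if "i < ?n" "j < ?n" for i j
    using that sym by (simp add: Mij)
  have psdM: "0 \<le> (\<Sum>i<?n. \<Sum>j<?n. x i * M $$ (i,j) * x j)" for x
  proof -
    define z :: "real^'n" where "z = (\<chi> k. x (inv_into {0..<?n} h k))"
    have zh: "z $ h i = x i" if "i < ?n" for i
      using that inj by (simp add: z_def)
    have "(\<Sum>i\<in>UNIV. \<Sum>j\<in>UNIV. z $ i * A $ i $ j * z $ j) =
          (\<Sum>i\<in>{0..<?n}. \<Sum>j\<in>UNIV. z $ h i * A $ h i $ j * z $ j)"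
      by (rule sum.reindex_bij_betw[OF h, symmetric])
    also have "\<dots> = (\<Sum>i\<in>{0..<?n}. \<Sum>j\<in>{0..<?n}. z $ h i * A $ h i $ h j * z $ h j)"
      by (intro sum.cong refl sum.reindex_bij_betw[OF h, symmetric])
    also have "\<dots> = (\<Sum>i<?n. \<Sum>j<?n. x i * M $$ (i,j) * x j)"
      by (auto simp: zh Mij lessThan_atLeast0 intro!: sum.cong)
    finally show ?thesis using psd[of z] by simp
  qed
  define C where "C = map_mat complex_of_real M"
  have Cc: "C \<in> carrier_mat ?n ?n" using Mc by (simp add: C_def)
  obtain es where es: "char_poly C = (\<Prod>a\<leftarrow>es. [:- a, 1:])"
    using char_poly_factorized[OF Cc] by auto
  obtain B P Q where BPQ: "schur_decomposition C es = (B,P,Q)"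
    by (cases "schur_decomposition C es") auto
  have sch: "similar_mat_wit C B P Q" "upper_triangular B" "diag_mat B = es"
    using schur_decomposition[OF Cc es BPQ] by auto
  have carr: "B \<in> carrier_mat ?n ?n" "P \<in> carrier_mat ?n ?n" "Q \<in> carrier_mat ?n ?n"
    and PQ: "Q * P = 1\<^sub>m ?n" and CPBQ: "C = P * B * Q"
    using sch(1) Cc unfolding similar_mat_wit_def Let_def by auto
  have detC: "Determinant.det C = (\<Prod>i<?n. B $$ (i,i))"
  proof -
    have "Determinant.det C = Determinant.det B"
      using sch(1) by (intro det_similar) (auto simp: similar_mat_def)
    also have "\<dots> = prod_list (diag_mat B)" by (rule det_upper_triangular[OF sch(2) carr(1)])
    also have "\<dots> = (\<Prod>i<?n. B $$ (i,i))"
      using carr(1) by (simp add: diag_mat_def prod.distinct_set_conv_list[symmetric] lessThan_atLeast0)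
    finally show ?thesis .
  qed
  have trC: "(\<Sum>i<?n. C $$ (i,i)) = (\<Sum>i<?n. B $$ (i,i))"
  proof -
    have "C = P * (B * Q)" using CPBQ carr by simp
    moreover have "(\<Sum>i<?n. (P * (B * Q)) $$ (i,i)) = (\<Sum>i<?n. ((B * Q) * P) $$ (i,i))"
      using carr by (intro tr_comm[of P ?n ?n "B * Q"]) auto
    ultimately have "(\<Sum>i<?n. C $$ (i,i)) = (\<Sum>i<?n. ((B * Q) * P) $$ (i,i))" by simp
    also have "(B * Q) * P = B" using carr PQ by simp
    finally show ?thesis .
  qed
  have diag: "Im (B $$ (i,i)) = 0 \<and> Re (B $$ (i,i)) \<ge> 0" if "i < ?n" for i
  proof -
    have "B $$ (i,i) \<in> set es" using sch(3) carr(1) that by (auto simp: diag_mat_def)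
    then have "poly (char_poly C) (B $$ (i,i)) = 0"
      unfolding es by (auto simp: poly_prod_list prod_list_zero_iff)
    then have "eigenvalue C (B $$ (i,i))" using eigenvalue_root_char_poly[OF Cc] by simp
    then show ?thesis using eig_nonneg[OF Mc symM psdM, of "B $$ (i,i)"] unfolding C_def by blast
  qed
  define d where "d i = Re (B $$ (i,i))" for i
  have Bd: "B $$ (i,i) = complex_of_real (d i)" if "i < ?n" for i
    using diag[OF that] unfolding d_def by (simp add: complex_eq_iff)
  have "complex_of_real (Determinants.det A) = complex_of_real (\<Prod>i<?n. d i)"
    unfolding detA using detC Bd by (simp add: C_def)
  then have dA: "Determinants.det A = (\<Prod>i<?n. d i)" by (simp only: of_real_eq_iff)
  have "complex_of_real (Determinants.trace A) = complex_of_real (\<Sum>i<?n. d i)"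
    unfolding trA using trC Bd Mc by (simp add: C_def)
  then have tA: "Determinants.trace A = (\<Sum>i<?n. d i)" by (simp only: of_real_eq_iff)
  show ?thesis unfolding dA tA
    by (rule amgm) (use diag in \<open>auto simp: d_def\<close>)
qed

lemma hess_entry:
  assumes "finite A"
  shows "mnl_hess A q u $ i $ j = (\<Sum>s\<in>A. q s * u s $ i * u s $ j)
           - (\<Sum>s\<in>A. q s * u s $ i) * (\<Sum>s\<in>A. q s * u s $ j)"
  by (simp add: mnl_hess_def sum_product ac_simps)

lemma var_le:
  fixes q a :: "'s \<Rightarrow> real"
  assumes "finite A" "\<And>s. s \<in> A \<Longrightarrow> q s \<ge> 0" "(\<Sum>s\<in>A. q s) = 1"
  shows "(\<Sum>s\<in>A. q s * a s)^2 \<le> (\<Sum>s\<in>A. q s * (a s)^2)"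
proof -
  define m where "m = (\<Sum>s\<in>A. q s * a s)"
  have "0 \<le> (\<Sum>s\<in>A. q s * (a s - m)^2)"
    using assms by (intro sum_nonneg) auto
  also have "(\<Sum>s\<in>A. q s * (a s - m)^2) = (\<Sum>s\<in>A. q s * (a s)^2) - 2 * m * (\<Sum>s\<in>A. q s * a s) + m^2 * (\<Sum>s\<in>A. q s)"
    by (simp add: power2_diff sum.distrib sum_subtractf sum_distrib_left sum_distrib_right algebra_simps)
  finally show ?thesis using assms(3) by (simp add: m_def power2_eq_square)
qed

lemma hess_psd:
  fixes u :: "'s \<Rightarrow> real^'n" and x :: "real^'n"
  assumes "finite A" "\<And>s. s \<in> A \<Longrightarrow> q s \<ge> 0" "(\<Sum>s\<in>A. q s) = 1"
  shows "0 \<le> (\<Sum>i\<in>UNIV. \<Sum>j\<in>UNIV. x $ i * mnl_hess A q u $ i $ j * x $ j)"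
proof -
  define a where "a s = (\<Sum>i\<in>UNIV. x $ i * u s $ i)" for s
  have e1: "(\<Sum>i\<in>UNIV. \<Sum>j\<in>UNIV. x $ i * (\<Sum>s\<in>A. q s * u s $ i * u s $ j) * x $ j)
      = (\<Sum>s\<in>A. q s * (a s)^2)"
  proof -
    have "(\<Sum>i\<in>UNIV. \<Sum>j\<in>UNIV. x $ i * (\<Sum>s\<in>A. q s * u s $ i * u s $ j) * x $ j)
       = (\<Sum>i\<in>UNIV. \<Sum>j\<in>UNIV. \<Sum>s\<in>A. q s * (x $ i * u s $ i) * (x $ j * u s $ j))"
      by (simp add: sum_distrib_left sum_distrib_right ac_simps)
    also have "\<dots> = (\<Sum>i\<in>UNIV. \<Sum>s\<in>A. \<Sum>j\<in>UNIV. q s * (x $ i * u s $ i) * (x $ j * u s $ j))"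
      by (intro sum.cong refl sum.swap)
    also have "\<dots> = (\<Sum>s\<in>A. \<Sum>i\<in>UNIV. \<Sum>j\<in>UNIV. q s * (x $ i * u s $ i) * (x $ j * u s $ j))"
      by (rule sum.swap)
    also have "\<dots> = (\<Sum>s\<in>A. q s * (a s)^2)"
      by (simp add: a_def power2_eq_square sum_distrib_left sum_distrib_right ac_simps)
    finally show ?thesis .
  qed
  have e2: "(\<Sum>i\<in>UNIV. \<Sum>j\<in>UNIV. x $ i * ((\<Sum>s\<in>A. q s * u s $ i) * (\<Sum>s\<in>A. q s * u s $ j)) * x $ j)
      = (\<Sum>s\<in>A. q s * a s)^2"
  proof -
    have "(\<Sum>s\<in>A. q s * a s) = (\<Sum>i\<in>UNIV. x $ i * (\<Sum>s\<in>A. q s * u s $ i))"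
      unfolding a_def by (simp add: sum_distrib_left ac_simps sum.swap[of _ A])
    then show ?thesis
      by (simp add: power2_eq_square sum_distrib_left sum_distrib_right ac_simps)
  qed
  have "(\<Sum>i\<in>UNIV. \<Sum>j\<in>UNIV. x $ i * mnl_hess A q u $ i $ j * x $ j)
     = (\<Sum>i\<in>UNIV. \<Sum>j\<in>UNIV. x $ i * (\<Sum>s\<in>A. q s * u s $ i * u s $ j) * x $ j)
     - (\<Sum>i\<in>UNIV. \<Sum>j\<in>UNIV. x $ i * ((\<Sum>s\<in>A. q s * u s $ i) * (\<Sum>s\<in>A. q s * u s $ j)) * x $ j)"
    by (simp add: hess_entry[OF assms(1)] sum_subtractf[symmetric] algebra_simps)
  also have "\<dots> = (\<Sum>s\<in>A. q s * (a s)^2) - (\<Sum>s\<in>A. q s * a s)^2" by (simp only: e1 e2)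
  finally show ?thesis using var_le[OF assms, of a] by simp
qed

lemma hess_trace:
  fixes u :: "'s \<Rightarrow> real^'n"
  assumes "finite A" "\<And>s. s \<in> A \<Longrightarrow> q s \<ge> 0" "(\<Sum>s\<in>A. q s) = 1"
  shows "0 \<le> Determinants.trace (mnl_hess A q u)"
    and "Determinants.trace (mnl_hess A q u) \<le> (\<Sum>s\<in>A. q s * (norm (u s))^2)"
proof -
  have d: "mnl_hess A q u $ i $ i = (\<Sum>s\<in>A. q s * (u s $ i)^2) - (\<Sum>s\<in>A. q s * u s $ i)^2" for i
    by (simp add: hess_entry[OF assms(1)] power2_eq_square mult.assoc)
  show "0 \<le> Determinants.trace (mnl_hess A q u)"
    unfolding Determinants.trace_def d using var_le[OF assms] by (intro sum_nonneg) simp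
  have "Determinants.trace (mnl_hess A q u) \<le> (\<Sum>i\<in>UNIV. \<Sum>s\<in>A. q s * (u s $ i)^2)"
    unfolding Determinants.trace_def d by (intro sum_mono) simp
  also have "\<dots> = (\<Sum>s\<in>A. q s * (\<Sum>i\<in>UNIV. (u s $ i)^2))"
    by (subst sum.swap) (simp add: sum_distrib_left)
  also have "\<dots> = (\<Sum>s\<in>A. q s * (norm (u s))^2)"
    by (simp add: norm_vec_def L2_set_def sum_nonneg)
  finally show "Determinants.trace (mnl_hess A q u) \<le> (\<Sum>s\<in>A. q s * (norm (u s))^2)" .
qed

lemma sigma_props:
  fixes H :: "nat \<Rightarrow> real^'n^'n" and lam c :: real
  assumes Hs: "\<And>t i j. t \<ge> 1 \<Longrightarrow> H t $ i $ j = H t $ j $ i"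
    and Hp: "\<And>t x. t \<ge> 1 \<Longrightarrow> 0 \<le> (\<Sum>i\<in>UNIV. \<Sum>j\<in>UNIV. x $ i * H t $ i $ j * x $ j)"
    and Ht: "\<And>t. t \<ge> 1 \<Longrightarrow> 0 \<le> Determinants.trace (H t) \<and> Determinants.trace (H t) \<le> c"
    and lam: "lam > 0"
    and t: "t \<ge> 1"
  shows "(\<forall>i j. ucm_sigma lam H t $ i $ j = ucm_sigma lam H t $ j $ i)
    \<and> (\<forall>x. 0 \<le> (\<Sum>i\<in>UNIV. \<Sum>j\<in>UNIV. x $ i * ucm_sigma lam H t $ i $ j * x $ j))
    \<and> CARD('n) * lam \<le> Determinants.trace (ucm_sigma lam H t)
    \<and> Determinants.trace (ucm_sigma lam H t) \<le> CARD('n) * lam + (real t - 1) * c"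
  using t
proof (induction t rule: nat_induct_at_least)
  case base
  have e: "ucm_sigma lam H (Suc 0) $ i $ j = (if i = j then lam else 0)" for i j
    by (simp add: Finite_Cartesian_Product.mat_def)
  have q: "(\<Sum>i\<in>UNIV. \<Sum>j\<in>UNIV. x $ i * ucm_sigma lam H (Suc 0) $ i $ j * x $ j)
      = (\<Sum>i\<in>UNIV. lam * (x $ i)^2)" for x :: "real^'n"
  proof -
    have "x $ i * (if i = j then lam else 0) * x $ j = (if j = i then lam * (x $ i)^2 else 0)" for i j
      by (auto simp: power2_eq_square)
    then show ?thesis unfolding e by simp
  qed
  have tr: "Determinants.trace (ucm_sigma lam H (Suc 0)) = CARD('n) * lam"
    unfolding Determinants.trace_def by (simp only: e) simp
  show ?case
  proof (intro conjI allI)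
    fix i j show "ucm_sigma lam H 1 $ i $ j = ucm_sigma lam H 1 $ j $ i"
      unfolding One_nat_def e by simp
  next
    fix x :: "real^'n"
    show "0 \<le> (\<Sum>i\<in>UNIV. \<Sum>j\<in>UNIV. x $ i * ucm_sigma lam H 1 $ i $ j * x $ j)"
      unfolding One_nat_def q using lam by (intro sum_nonneg) auto
  qed (simp_all only: One_nat_def tr, simp_all)
next
  case (Suc t)
  then obtain t' where t': "t = Suc t'" by (cases t) auto
  have eq: "ucm_sigma lam H (Suc t) = ucm_sigma lam H t + H t" by (simp add: t')
  note IH = Suc.IH
  have t1: "t \<ge> 1" by (rule Suc.hyps)
  have q: "(\<Sum>i\<in>UNIV. \<Sum>j\<in>UNIV. x $ i * ucm_sigma lam H (Suc t) $ i $ j * x $ j)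
     = (\<Sum>i\<in>UNIV. \<Sum>j\<in>UNIV. x $ i * ucm_sigma lam H t $ i $ j * x $ j)
     + (\<Sum>i\<in>UNIV. \<Sum>j\<in>UNIV. x $ i * H t $ i $ j * x $ j)" for x :: "real^'n"
  proof -
    have "x $ i * ucm_sigma lam H (Suc t) $ i $ j * x $ j
        = x $ i * ucm_sigma lam H t $ i $ j * x $ j + x $ i * H t $ i $ j * x $ j" for i j
      unfolding eq by (simp add: distrib_left distrib_right)
    then show ?thesis by (simp only: sum.distrib)
  qed
  have tr: "Determinants.trace (ucm_sigma lam H (Suc t)) = Determinants.trace (ucm_sigma lam H t) + Determinants.trace (H t)"
    unfolding eq by (rule trace_add)
  have symS: "ucm_sigma lam H t $ i $ j = ucm_sigma lam H t $ j $ i" for i j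
    using IH by blast
  have psdS: "0 \<le> (\<Sum>i\<in>UNIV. \<Sum>j\<in>UNIV. x $ i * ucm_sigma lam H t $ i $ j * x $ j)" for x
    using IH by blast
  have trS: "CARD('n) * lam \<le> Determinants.trace (ucm_sigma lam H t)"
    "Determinants.trace (ucm_sigma lam H t) \<le> CARD('n) * lam + (real t - 1) * c"
    using IH by blast+
  have trH: "0 \<le> Determinants.trace (H t)" "Determinants.trace (H t) \<le> c" using Ht[OF t1] by auto
  show ?case
  proof (intro conjI allI)
    fix i j show "ucm_sigma lam H (Suc t) $ i $ j = ucm_sigma lam H (Suc t) $ j $ i"
      unfolding eq vector_add_component using symS[of i j] Hs[OF t1, of i j] by simp
  next
    fix x :: "real^'n" show "0 \<le> (\<Sum>i\<in>UNIV. \<Sum>j\<in>UNIV. x $ i * ucm_sigma lam H (Suc t) $ i $ j * x $ j)"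
      unfolding q using psdS[of x] Hp[OF t1, of x] by (rule add_nonneg_nonneg)
  next
    show "CARD('n) * lam \<le> Determinants.trace (ucm_sigma lam H (Suc t))"
      unfolding tr using trS trH by linarith
  next
    have "real (Suc t) - 1 = (real t - 1) + 1" by simp
    then have "(real (Suc t) - 1) * c = (real t - 1) * c + c" by (simp only: distrib_right mult_1)
    then show "Determinants.trace (ucm_sigma lam H (Suc t)) \<le> CARD('n) * lam + (real (Suc t) - 1) * c"
      unfolding tr using trS trH by linarith
  qed
qed

lemma ep_props:
  fixes S :: "nat \<Rightarrow> real^'n^'n"
  assumes "t \<ge> 1"
  shows "1 \<le> ep_start S t \<and> ep_start S t \<le> t \<and>
    2 ^ card {u\<in>{1..t}. ep_start S u = u} * Determinants.det (S 1) \<le> 2 * Determinants.det (S (ep_start S t))"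
  using assms
proof (induction t rule: nat_induct_at_least)
  case base
  have "{u\<in>{1..1::nat}. ep_start S u = u} = {1}" by auto
  then show ?case by simp
next
  case (Suc t)
  then obtain t' where t': "t = Suc t'" by (cases t) auto
  let ?c = "card {u\<in>{1..t}. ep_start S u = u}"
  have set: "{u\<in>{1..Suc t}. ep_start S u = u} = (if ep_start S (Suc t) = Suc t then insert (Suc t) {u\<in>{1..t}. ep_start S u = u} else {u\<in>{1..t}. ep_start S u = u})"
    by (auto simp: le_Suc_eq)
  show ?case
  proof (cases "Determinants.det (S (Suc t)) > 2 * Determinants.det (S (ep_start S t))")
    case True
    then have ep: "ep_start S (Suc t) = Suc t" by (simp add: t')
    have "card {u\<in>{1..Suc t}. ep_start S u = u} = Suc ?c"
      unfolding set ep by simp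
    then show ?thesis using Suc.IH True ep by auto
  next
    case False
    then have ep: "ep_start S (Suc t) = ep_start S t" by (simp add: t')
    then have "ep_start S (Suc t) \<noteq> Suc t" using Suc.IH by auto
    then have "card {u\<in>{1..Suc t}. ep_start S u = u} = ?c" unfolding set by simp
    then show ?thesis using Suc.IH ep by auto
  qed
qed

theorem lemma21:
  fixes lam L :: real
    and St :: "nat \<Rightarrow> 's set"
    and p :: "nat \<Rightarrow> real^'n \<Rightarrow> 's \<Rightarrow> real"
    and phi :: "nat \<Rightarrow> 's \<Rightarrow> real^'n"
    and theta :: "nat \<Rightarrow> real^'n"
    and T :: nat
  assumes lam_pos: "lam > 0"
    and fin: "\<And>t. t \<ge> 1 \<Longrightarrow> finite (St t)"
    and p_nonneg: "\<And>t th s. t \<ge> 1 \<Longrightarrow> s \<in> St t \<Longrightarrow> p t th s \<ge> 0"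
    and p_sum: "\<And>t th. t \<ge> 1 \<Longrightarrow> (\<Sum>s\<in>St t. p t th s) = 1"
    and phi_bd: "\<And>t s. t \<ge> 1 \<Longrightarrow> s \<in> St t \<Longrightarrow> norm (phi t s) \<le> L"
  shows "real (num_episodes
            (ucm_sigma lam (\<lambda>t. mnl_hess (St t) (p t (theta (Suc t))) (phi t))) T)
         \<le> 1 + real CARD('n) * log 2 (1 + 2 * real T * L\<^sup>2 / lam)"
proof (cases "T = 0")
  case True
  then show ?thesis by (simp add: num_episodes_def)
next
  case False
  then have T1: "T \<ge> 1" by simp
  define H where "H = (\<lambda>t. mnl_hess (St t) (p t (theta (Suc t))) (phi t))"
  define S where "S = ucm_sigma lam H"
  define n where "n = CARD('n)"
  have n1: "n \<ge> 1" unfolding n_def by (simp add: Suc_le_eq)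
  have Hs: "H t $ i $ j = H t $ j $ i" if "t \<ge> 1" for t i j
    unfolding H_def using fin[OF that] by (simp add: hess_entry ac_simps)
  have Hp: "0 \<le> (\<Sum>i\<in>UNIV. \<Sum>j\<in>UNIV. x $ i * H t $ i $ j * x $ j)" if "t \<ge> 1" for t x
    unfolding H_def by (rule hess_psd) (use fin p_nonneg p_sum that in auto)
  have Ht: "0 \<le> Determinants.trace (H t) \<and> Determinants.trace (H t) \<le> L^2" if "t \<ge> 1" for t
  proof
    show "0 \<le> Determinants.trace (H t)"
      unfolding H_def by (rule hess_trace(1)) (use fin p_nonneg p_sum that in auto)
    have "Determinants.trace (H t) \<le> (\<Sum>s\<in>St t. p t (theta (Suc t)) s * (norm (phi t s))^2)"
      unfolding H_def by (rule hess_trace(2)) (use fin p_nonneg p_sum that in auto)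
    also have "\<dots> \<le> (\<Sum>s\<in>St t. p t (theta (Suc t)) s * L^2)"
      by (intro sum_mono mult_left_mono power_mono) (use phi_bd p_nonneg that in auto)
    also have "\<dots> = L^2" using p_sum[OF that] by (simp add: sum_distrib_right[symmetric])
    finally show "Determinants.trace (H t) \<le> L^2" .
  qed
  define e where "e = ep_start S T"
  define K where "K = num_episodes S T"
  have ep: "1 \<le> e" "e \<le> T" "2 ^ K * Determinants.det (S 1) \<le> 2 * Determinants.det (S e)"
    using ep_props[OF T1, of S] unfolding e_def K_def num_episodes_def by auto
  have sp: "(\<forall>i j. S e $ i $ j = S e $ j $ i)
    \<and> (\<forall>x. 0 \<le> (\<Sum>i\<in>UNIV. \<Sum>j\<in>UNIV. x $ i * S e $ i $ j * x $ j))
    \<and> n * lam \<le> Determinants.trace (S e)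
    \<and> Determinants.trace (S e) \<le> n * lam + (real e - 1) * L^2"
    unfolding S_def n_def by (rule sigma_props[OF Hs Hp Ht lam_pos ep(1)])
  have det1: "Determinants.det (S 1) = lam ^ n"
  proof -
    have "Determinants.det (S 1) = (\<Prod>i\<in>UNIV. S 1 $ i $ i)"
      by (rule det_diagonal) (simp add: S_def Finite_Cartesian_Product.mat_def)
    also have "\<dots> = lam ^ n" by (simp add: S_def Finite_Cartesian_Product.mat_def n_def)
    finally show ?thesis .
  qed
  define X where "X = 2 * real T * L\<^sup>2 / lam"
  have X0: "X \<ge> 0" unfolding X_def using lam_pos by simp
  have "Determinants.det (S e) \<le> (Determinants.trace (S e) / n) ^ n"
    unfolding n_def by (rule det_le_trace) (use sp in auto)
  also have "\<dots> \<le> (lam * (1 + X)) ^ n"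
  proof (rule power_mono)
    have "0 \<le> n * lam" using lam_pos by simp
    then have "0 \<le> Determinants.trace (S e)" using sp by linarith
    then show "0 \<le> Determinants.trace (S e) / n" by simp
    have "Determinants.trace (S e) / n \<le> (n * lam + (real e - 1) * L^2) / n"
      using sp n1 by (simp add: divide_right_mono)
    also have "\<dots> = lam + (real e - 1) * L^2 / n" using n1 by (simp add: field_simps)
    also have "\<dots> \<le> lam + (real e - 1) * L^2"
    proof -
      have v0: "0 \<le> (real e - 1) * L^2" using ep(1) by simp
      have "(real e - 1) * L^2 / n \<le> (real e - 1) * L^2 / 1"
        using n1 v0 by (intro divide_left_mono) auto
      then show ?thesis by simp
    qed
    also have "\<dots> \<le> lam + 2 * real T * L^2"
      using ep(2) by (intro add_left_mono mult_right_mono) auto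
    also have "\<dots> = lam * (1 + X)" unfolding X_def using lam_pos by (simp add: field_simps)
    finally show "Determinants.trace (S e) / n \<le> lam * (1 + X)" .
  qed
  finally have "2 ^ K * lam ^ n \<le> 2 * (lam ^ n * (1 + X) ^ n)"
    using ep(3) det1 by (simp add: power_mult_distrib)
  then have pw: "2 ^ K \<le> 2 * (1 + X) ^ n"
    using lam_pos by (simp add: ac_simps)
  have "real K = log 2 (2 ^ K)" by simp
  also have "\<dots> \<le> log 2 (2 * (1 + X) ^ n)"
    using pw X0 by (subst log_le_cancel_iff) auto
  also have "\<dots> = 1 + n * log 2 (1 + X)"
    using X0 by (simp add: log_mult log_nat_power)
  finally show ?thesis unfolding K_def S_def H_def n_def X_def .
qed


thm_deps lemma21

end
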